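(* Let $f:\mathbb R^n\to\mathbb R$ be convex, differentiable and $L$-Lipschitz smooth, $g:\mathbb R^n\to\mathbb R\cup\{+\infty\}$ proper, closed and convex, $F=f+g$. Let $(\alpha_k)_{k\ge0}\subseteq(0,1]$, $(B_k)_{k\ge0}\subseteq(0,\infty)$, $(\rho_k)_{k\ge0}\subseteq[0,\infty)$, $(\epsilon_k)_{k\ge0}\subseteq(0,\infty)$, and $L_k=B_k+\rho_k$. Given $x_{-1},x^\circ_{-1}\in\mathbb R^n$, let $(y_k,x_k,x^\circ_k)_{k\ge0}$ satisfy for all $k\ge0$: $y_k=\alpha_kx^\circ_{k-1}+(1-\alpha_k)x_{k-1}$; $x_k\approx_{\epsilon_k}T_{L_k}(y_k)$; $D_f(x_k,y_k)\le\frac{B_k}2\|x_k-y_k\|^2$; $x^\circ_k=x_{k-1}+\alpha_k^{-1}(x_k-x_{k-1})$. Then for any $\bar x\in\mathbb R^n$ and all $k\ge0$, $$\frac{\rho_k}2\|x_k-y_k\|^2-\epsilon_k\le(1-\alpha_k)(F(x_{k-1})-F(\bar x))+F(\bar x)-F(x_k)+\frac{\alpha_k^2L_k}2\|\bar x-x^\circ_{k-1}\|^2-\frac{\alpha_k^2L_k}2\|\bar x-x^\circ_k\|^2.$$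
   Context: $D_f(u,w)=f(u)-f(w)-\langle\nabla f(w),u-w\rangle$; $L$-Lipschitz smooth means $D_f(u,w)\le\frac L2\|u-w\|^2$ for all $u,w$. For proper $h$, $\epsilon\ge0$: $\partial_\epsilon h(\bar x)=\{v:\langle v,u-\bar x\rangle\le h(u)-h(\bar x)+\epsilon\ \forall u\}$ for $\bar x\in\operatorname{dom}h$, $\emptyset$ otherwise. $\tilde x\approx_\epsilon T_\rho(x)$ means $\mathbf 0\in\nabla f(x)-\rho(x-\tilde x)+\partial_\epsilon g(\tilde x)$. *)

theory Defs
  imports "HOL-Analysis.Analysis" "HOL-Library.Extended_Real"
begin

definition grad :: "('a::euclidean_space \<Rightarrow> real) \<Rightarrow> 'a \<Rightarrow> 'a" where
  "grad f w = (THE v. (f has_derivative (\<lambda>h. inner v h)) (at w))"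

definition bregman :: "('a::euclidean_space \<Rightarrow> real) \<Rightarrow> 'a \<Rightarrow> 'a \<Rightarrow> real" where
  "bregman f u w = f u - f w - inner (grad f w) (u - w)"

text \<open>Functions into \<real> \<union> {+\<infinity>}, modelled as ereal-valued functions never equal to -\<infinity>.\<close>
definition proper_fun :: "('a \<Rightarrow> ereal) \<Rightarrow> bool" where
  "proper_fun g \<longleftrightarrow> (\<exists>x. g x < \<infinity>) \<and> (\<forall>x. g x > -\<infinity>)"

definition convex_efun :: "('a::real_vector \<Rightarrow> ereal) \<Rightarrow> bool" where
  "convex_efun g \<longleftrightarrow> (\<forall>x y t. 0 \<le> t \<and> t \<le> 1 \<longrightarrow>
      g ((1 - t) *\<^sub>R x + t *\<^sub>R y) \<le> ereal (1 - t) * g x + ereal t * g y)"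

definition closed_efun :: "('a::euclidean_space \<Rightarrow> ereal) \<Rightarrow> bool" where
  "closed_efun g \<longleftrightarrow> closed {(x, r::real). g x \<le> ereal r}"

definition eps_subdiff :: "real \<Rightarrow> ('a::euclidean_space \<Rightarrow> ereal) \<Rightarrow> 'a \<Rightarrow> 'a set" where
  "eps_subdiff \<epsilon> h xb = (if h xb < \<infinity> then
      {v. \<forall>u. ereal (inner v (u - xb)) \<le> h u - h xb + ereal \<epsilon>} else {})"

text \<open>xt \<approx>_\<epsilon> T_\<rho>(x):  0 \<in> \<nabla>f(x) - \<rho>(x - xt) + \<partial>_\<epsilon> g(xt).\<close>
definition approx_prox :: "('a::euclidean_space \<Rightarrow> real) \<Rightarrow> ('a \<Rightarrow> ereal) \<Rightarrow> real \<Rightarrow> real \<Rightarrow> 'a \<Rightarrow> 'a \<Rightarrow> bool" where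
  "approx_prox f g \<epsilon> \<rho> x xt \<longleftrightarrow>
     (\<exists>v \<in> eps_subdiff \<epsilon> g xt. 0 = grad f x - \<rho> *\<^sub>R (x - xt) + v)"

end

theory Submission
  imports Defs
begin


lemma grad_hasderiv:
  fixes f :: "'a::euclidean_space \<Rightarrow> real"
  assumes "f differentiable (at w)"
  shows "(f has_derivative (\<lambda>h. inner (grad f w) h)) (at w)"
proof -
  obtain D where D: "(f has_derivative D) (at w)" using assms differentiable_def by blast
  have lin: "linear D" using D has_derivative_linear by blast
  define v where "v = (\<Sum>i\<in>Basis. D i *\<^sub>R i)"
  have eq: "D h = inner v h" for h
  proof -
    have "D h = D (\<Sum>i\<in>Basis. (h \<bullet> i) *\<^sub>R i)" by (simp add: euclidean_representation)
    also have "\<dots> = (\<Sum>i\<in>Basis. (h \<bullet> i) * D i)" by (simp add: linear_sum[OF lin] linear_scale[OF lin])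
    also have "\<dots> = inner v h" unfolding v_def by (simp add: inner_sum_right inner_commute mult.commute)
    finally show ?thesis .
  qed
  have Dv: "(f has_derivative (\<lambda>h. inner v h)) (at w)" proof -
    have "D = (\<lambda>h. inner v h)" using eq by (rule ext)
    then show ?thesis using D by simp
  qed
  have "(THE v. (f has_derivative (\<lambda>h. inner v h)) (at w)) = v"
  proof (rule the_equality)
    fix v' assume "(f has_derivative (\<lambda>h. inner v' h)) (at w)"
    then have "(\<lambda>h. inner v' h) = (\<lambda>h. inner v h)" using Dv has_derivative_unique by blast
    then have "inner v' (v' - v) = inner v (v' - v)" using fun_cong[of "\<lambda>h. inner v' h" "\<lambda>h. inner v h" "v' - v"] by simp
    then have "inner (v' - v) (v' - v) = 0" by (simp add: inner_diff_left)
    then show "v' = v" by simp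
  qed (rule Dv)
  then show ?thesis using Dv by (simp add: grad_def)
qed


lemma grad_ineq:
  fixes f :: "'a::euclidean_space \<Rightarrow> real"
  assumes cv: "convex_on UNIV f" and d: "f differentiable_on UNIV"
  shows "f y + inner (grad f y) (u - y) \<le> f u"
proof -
  define d where "d = u - y"
  define \<phi> where "\<phi> t = f (y + t *\<^sub>R d)" for t :: real
  have c1: "convex_on UNIV \<phi>"
  proof (rule convex_onI)
    fix t s1 s2 :: real assume t: "0 < t" "t < 1"
    have eq: "y + ((1 - t) * s1 + t * s2) *\<^sub>R d = (1 - t) *\<^sub>R (y + s1 *\<^sub>R d) + t *\<^sub>R (y + s2 *\<^sub>R d)"
      by (simp add: algebra_simps)
    have "f ((1 - t) *\<^sub>R (y + s1 *\<^sub>R d) + t *\<^sub>R (y + s2 *\<^sub>R d)) \<le> (1 - t) * f (y + s1 *\<^sub>R d) + t * f (y + s2 *\<^sub>R d)"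
      using t by (intro convex_onD[OF cv]) auto
    then show "\<phi> ((1 - t) *\<^sub>R s1 + t *\<^sub>R s2) \<le> (1 - t) * \<phi> s1 + t * \<phi> s2"
      unfolding \<phi>_def real_scaleR_def eq .
  qed (rule convex_UNIV)
  have fd: "(f has_derivative (\<lambda>h. inner (grad f y) h)) (at (y + 0 *\<^sub>R d))"
  proof -
    have "f differentiable (at y)" using d unfolding differentiable_on_def by simp
    then show ?thesis using grad_hasderiv by simp
  qed
  have ld: "((\<lambda>t. y + t *\<^sub>R d) has_derivative (\<lambda>t. t *\<^sub>R d)) (at 0)"
    by (auto intro!: derivative_eq_intros)
  have "(\<phi> has_derivative (\<lambda>t. inner (grad f y) (t *\<^sub>R d))) (at 0)"
    unfolding \<phi>_def using has_derivative_compose[OF ld fd] by (simp add: o_def)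
  moreover have "(\<lambda>t. inner (grad f y) (t *\<^sub>R d)) = (*) (inner (grad f y) d)"
    by (rule ext) simp
  ultimately have "(\<phi> has_field_derivative inner (grad f y) d) (at 0)"
    unfolding has_field_derivative_def by simp
  then have "\<phi> 1 - \<phi> 0 \<ge> inner (grad f y) d * (1 - 0)"
    by (intro convex_on_imp_above_tangent[OF c1]) auto
  then show ?thesis by (simp add: \<phi>_def d_def)
qed

lemma main:
  fixes f :: "real ^ 'n \<Rightarrow> real" and g :: "real ^ 'n \<Rightarrow> ereal"
    and L :: real and \<alpha> B \<rho> \<epsilon> :: "nat \<Rightarrow> real"
    and x xo y :: "nat \<Rightarrow> real ^ 'n" and xbar :: "real ^ 'n" and k :: nat
  assumes f_convex: "convex_on UNIV f"
    and f_diff: "f differentiable_on UNIV"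
    and g_proper: "proper_fun g" and g_convex: "convex_efun g"
    and alpha: "\<forall>j. 0 < \<alpha> j \<and> \<alpha> j \<le> 1"
    and y_def: "\<forall>j. y j = \<alpha> j *\<^sub>R xo j + (1 - \<alpha> j) *\<^sub>R x j"
    and x_approx: "\<forall>j. approx_prox f g (\<epsilon> j) (B j + \<rho> j) (y j) (x (Suc j))"
    and x_breg: "\<forall>j. bregman f (x (Suc j)) (y j) \<le> B j / 2 * (norm (x (Suc j) - y j))\<^sup>2"
    and xo_def: "\<forall>j. xo (Suc j) = x j + (1 / \<alpha> j) *\<^sub>R (x (Suc j) - x j)"
    and xbar_dom: "g xbar < \<infinity>"
  shows "ereal (\<rho> k / 2 * (norm (x (Suc k) - y k))\<^sup>2 - \<epsilon> k)
    \<le> ereal (1 - \<alpha> k) * ((ereal (f (x k)) + g (x k)) - (ereal (f xbar) + g xbar))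
       + (ereal (f xbar) + g xbar) - (ereal (f (x (Suc k))) + g (x (Suc k)))
       + ereal (\<alpha> k ^ 2 * (B k + \<rho> k) / 2 * (norm (xbar - xo k))\<^sup>2)
       - ereal (\<alpha> k ^ 2 * (B k + \<rho> k) / 2 * (norm (xbar - xo (Suc k)))\<^sup>2)"
proof -
  define a where "a = \<alpha> k"
  define Lk where "Lk = B k + \<rho> k"
  define xp where "xp = x k"
  define z where "z = x (Suc k)"
  define yk where "yk = y k"
  define o1 where "o1 = xo k"
  define o2 where "o2 = xo (Suc k)"
  define gr where "gr = grad f yk"
  have a0: "0 < a" "a \<le> 1" using alpha a_def by auto
  obtain v where v: "v \<in> eps_subdiff (\<epsilon> k) g z" "0 = gr - Lk *\<^sub>R (yk - z) + v"
    using x_approx unfolding approx_prox_def gr_def Lk_def yk_def z_def by blast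
  have gz_fin: "g z < \<infinity>" and sub: "\<And>u. ereal (inner v (u - z)) \<le> g u - g z + ereal (\<epsilon> k)"
    using v(1) unfolding eps_subdiff_def by (auto split: if_splits)
  have nm: "g w \<noteq> -\<infinity>" for w using g_proper unfolding proper_fun_def by auto
  obtain gz where gz: "g z = ereal gz" using gz_fin nm[of z] by (cases "g z") auto
  obtain gb where gb: "g xbar = ereal gb" using xbar_dom nm[of xbar] by (cases "g xbar") auto
  define u where "u = (1 - a) *\<^sub>R xp + a *\<^sub>R xbar"
  have gu_le: "g u \<le> ereal (1 - a) * g xp + ereal a * g xbar"
    using g_convex a0 unfolding convex_efun_def u_def by auto
  have vv: "v = Lk *\<^sub>R (yk - z) - gr" using v(2) by (simp add: algebra_simps)
  have e: "o2 = xp + (1/a) *\<^sub>R (z - xp)" using xo_def by (simp add: o2_def xp_def z_def a_def)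
  then have "a *\<^sub>R o2 = a *\<^sub>R xp + (a * (1/a)) *\<^sub>R (z - xp)" by (simp add: scaleR_add_right)
  then have "a *\<^sub>R o2 = a *\<^sub>R xp + (z - xp)" using a0 by simp
  then have z_eq: "z = (1 - a) *\<^sub>R xp + a *\<^sub>R o2" by (simp add: algebra_simps)
  have yz: "yk - z = a *\<^sub>R (o1 - o2)" using y_def unfolding yk_def z_eq o1_def a_def xp_def
    by (simp add: algebra_simps)
  have uz: "u - z = a *\<^sub>R (xbar - o2)" unfolding u_def z_eq by (simp add: algebra_simps)
  define bb where "bb = o1 - o2"
  define cc where "cc = xbar - o2"
  have n1: "(norm (z - yk))\<^sup>2 = a\<^sup>2 * inner bb bb"
  proof -
    have "z - yk = - (yk - z)" by simp
    also have "\<dots> = (- a) *\<^sub>R bb" using yz unfolding bb_def by simp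
    finally have "z - yk = (- a) *\<^sub>R bb" .
    then have "norm (z - yk) = \<bar>a\<bar> * norm bb" by simp
    then have "(norm (z - yk))\<^sup>2 = a\<^sup>2 * (norm bb)\<^sup>2" by (simp add: power_mult_distrib)
    then show ?thesis by (simp only: power2_norm_eq_inner)
  qed
  have n1': "(norm (z - yk))\<^sup>2 = a\<^sup>2 * inner bb bb"
    using n1 .
  have n2: "(norm (xbar - o1))\<^sup>2 = inner cc cc - 2 * inner bb cc + inner bb bb"
  proof -
    have "xbar - o1 = cc - bb" unfolding cc_def bb_def by simp
    then show ?thesis by (simp add: power2_norm_eq_inner inner_diff_left inner_diff_right inner_commute)
  qed
  have n3: "(norm (xbar - o2))\<^sup>2 = inner cc cc" unfolding cc_def by (simp add: power2_norm_eq_inner)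
  have i1: "inner (yk - z) (u - z) = a\<^sup>2 * inner bb cc" unfolding yz uz bb_def cc_def
    by (simp add: power2_eq_square)
  have key: "Lk * inner (yk - z) (u - z) - B k / 2 * (norm (z - yk))\<^sup>2
      = \<rho> k / 2 * (norm (z - yk))\<^sup>2 - a\<^sup>2 * Lk / 2 * (norm (xbar - o1))\<^sup>2 + a\<^sup>2 * Lk / 2 * (norm (xbar - o2))\<^sup>2"
    unfolding i1 n1 n2 n3 Lk_def by (simp add: field_simps)
  have ginq: "f yk + inner gr (u - yk) \<le> f u" unfolding gr_def by (rule grad_ineq[OF f_convex f_diff])
  have breg: "f z - f yk - inner gr (z - yk) \<le> B k / 2 * (norm (z - yk))\<^sup>2"
    using x_breg unfolding bregman_def gr_def z_def yk_def by auto
  have fu: "f u \<le> (1 - a) * f xp + a * f xbar"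
    using f_convex a0 unfolding convex_on_def u_def by auto
  have vu: "inner v (u - z) = Lk * inner (yk - z) (u - z) - inner gr (u - z)"
    unfolding vv by (simp add: inner_diff_left)
  have gsplit: "inner gr (u - yk) = inner gr (u - z) + inner gr (z - yk)"
  proof -
    have "u - yk = (u - z) + (z - yk)" by simp
    then show ?thesis by (simp only: inner_add_right)
  qed
  show ?thesis
  proof (cases "g xp = \<infinity> \<and> a < 1")
    case True
    then have I: "ereal (1 - \<alpha> k) * ((ereal (f (x k)) + g (x k)) - (ereal (f xbar) + g xbar)) = \<infinity>"
      unfolding a_def xp_def gb by simp
    show ?thesis unfolding I unfolding gz[unfolded z_def] gb by simp
  next
    case False
    define gp where "gp = (if g xp = \<infinity> then 0 else real_of_ereal (g xp))"
    have P: "ereal (1 - a) * ((ereal (f xp) + g xp) - (ereal (f xbar) + g xbar))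
        = ereal ((1 - a) * (f xp + gp - f xbar - gb))"
    proof (cases "g xp = \<infinity>")
      case True then have "a = 1" using False a0 by auto
      then show ?thesis using True gb by (simp add: zero_ereal_def[symmetric])
    next
      case c: False
      then have "g xp = ereal gp" using nm[of xp] unfolding gp_def by (cases "g xp") auto
      then show ?thesis using gb by simp
    qed
    have Q: "g u \<le> ereal ((1 - a) * gp + a * gb)"
    proof (cases "g xp = \<infinity>")
      case True then have "a = 1" using False a0 by auto
      then show ?thesis using gb by (simp add: u_def)
    next
      case c: False
      then have "g xp = ereal gp" using nm[of xp] unfolding gp_def by (cases "g xp") auto
      then show ?thesis using gb gu_le by simp
    qed
    obtain gu where gu: "g u = ereal gu" using Q nm[of u] by (cases "g u") auto
    have gule: "gu \<le> (1 - a) * gp + a * gb" using Q gu by simp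
    have sb: "inner v (u - z) \<le> gu - gz + \<epsilon> k" using sub[of u] gu gz by simp
    have real: "\<rho> k / 2 * (norm (z - yk))\<^sup>2 - \<epsilon> k \<le> (1 - a) * (f xp + gp - f xbar - gb)
       + (f xbar + gb) - (f z + gz) + a\<^sup>2 * Lk / 2 * (norm (xbar - o1))\<^sup>2 - a\<^sup>2 * Lk / 2 * (norm (xbar - o2))\<^sup>2"
    proof -
      have ex: "(1 - a) * (f xp + gp - f xbar - gb) + (f xbar + gb) = ((1-a)*f xp + a*f xbar) + ((1-a)*gp + a*gb)"
        by (simp add: algebra_simps)
      show ?thesis using key ginq breg fu vu gsplit gule sb ex by linarith
    qed
    have P': "ereal (1 - \<alpha> k) * ((ereal (f (x k)) + g (x k)) - (ereal (f xbar) + g xbar))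
        = ereal ((1 - a) * (f xp + gp - f xbar - gb))" using P unfolding a_def xp_def .
    have gz': "g (x (Suc k)) = ereal gz" using gz unfolding z_def .
    have E: "ereal (1 - \<alpha> k) * ((ereal (f (x k)) + g (x k)) - (ereal (f xbar) + g xbar))
       + (ereal (f xbar) + g xbar) - (ereal (f (x (Suc k))) + g (x (Suc k)))
       + ereal (\<alpha> k ^ 2 * (B k + \<rho> k) / 2 * (norm (xbar - xo k))\<^sup>2)
       - ereal (\<alpha> k ^ 2 * (B k + \<rho> k) / 2 * (norm (xbar - xo (Suc k)))\<^sup>2)
      = ereal ((1 - a) * (f xp + gp - f xbar - gb) + (f xbar + gb) - (f (x (Suc k)) + gz)
       + \<alpha> k ^ 2 * (B k + \<rho> k) / 2 * (norm (xbar - xo k))\<^sup>2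
       - \<alpha> k ^ 2 * (B k + \<rho> k) / 2 * (norm (xbar - xo (Suc k)))\<^sup>2)"
      apply (subst P')
      apply (simp only: gb gz' plus_ereal.simps(1) ereal_minus(1))
      done
    have real': "\<rho> k / 2 * (norm (x (Suc k) - y k))\<^sup>2 - \<epsilon> k \<le> (1 - a) * (f xp + gp - f xbar - gb) + (f xbar + gb) - (f (x (Suc k)) + gz)
       + \<alpha> k ^ 2 * (B k + \<rho> k) / 2 * (norm (xbar - xo k))\<^sup>2
       - \<alpha> k ^ 2 * (B k + \<rho> k) / 2 * (norm (xbar - xo (Suc k)))\<^sup>2"
      using real unfolding z_def yk_def a_def Lk_def o1_def o2_def by (simp only: norm_minus_commute)
    show ?thesis unfolding E ereal_less_eq(3) by (rule real')
  qed
qed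


theorem lemma3p2:
  fixes f :: "real ^ 'n \<Rightarrow> real" and g :: "real ^ 'n \<Rightarrow> ereal"
    and L :: real and \<alpha> B \<rho> \<epsilon> :: "nat \<Rightarrow> real"
    and x xo y :: "nat \<Rightarrow> real ^ 'n" and xbar :: "real ^ 'n" and k :: nat
  assumes f_convex: "convex_on UNIV f"
    and f_diff: "f differentiable_on UNIV"
    and f_smooth: "\<forall>u w. bregman f u w \<le> L / 2 * (norm (u - w))\<^sup>2"
    and g_proper: "proper_fun g" and g_closed: "closed_efun g" and g_convex: "convex_efun g"
    and alpha: "\<forall>j. 0 < \<alpha> j \<and> \<alpha> j \<le> 1"
    and B_pos: "\<forall>j. 0 < B j"
    and rho_nn: "\<forall>j. 0 \<le> \<rho> j"
    and eps_pos: "\<forall>j. 0 < \<epsilon> j"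
    and y_def: "\<forall>j. y j = \<alpha> j *\<^sub>R xo j + (1 - \<alpha> j) *\<^sub>R x j"
    and x_approx: "\<forall>j. approx_prox f g (\<epsilon> j) (B j + \<rho> j) (y j) (x (Suc j))"
    and x_breg: "\<forall>j. bregman f (x (Suc j)) (y j) \<le> B j / 2 * (norm (x (Suc j) - y j))\<^sup>2"
    and xo_def: "\<forall>j. xo (Suc j) = x j + (1 / \<alpha> j) *\<^sub>R (x (Suc j) - x j)"
    and xbar_dom: "g xbar < \<infinity>"
  shows "ereal (\<rho> k / 2 * (norm (x (Suc k) - y k))\<^sup>2 - \<epsilon> k)
    \<le> ereal (1 - \<alpha> k) * ((ereal (f (x k)) + g (x k)) - (ereal (f xbar) + g xbar))
       + (ereal (f xbar) + g xbar) - (ereal (f (x (Suc k))) + g (x (Suc k)))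
       + ereal (\<alpha> k ^ 2 * (B k + \<rho> k) / 2 * (norm (xbar - xo k))\<^sup>2)
       - ereal (\<alpha> k ^ 2 * (B k + \<rho> k) / 2 * (norm (xbar - xo (Suc k)))\<^sup>2)"
  by (rule main[OF f_convex f_diff g_proper g_convex alpha y_def x_approx x_breg xo_def xbar_dom])

end
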